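(* For the reduced system $\dot x=G(x)$ (context), with the stated parameter inequalities, let $J(x)=\partial G/\partial x$ be the Jacobian at $x=(\mu_{34},s,\mu_{200},z)\in(0,\infty)^4$, with indices ordered as $(\mu_{34},s,\mu_{200},z)$. Then, for every $x\in(0,\infty)^4$: $J_{13}=J_{23}=J_{24}=J_{31}=J_{41}=0$; $J_{12}<0$, $J_{14}<0$, $J_{32}<0$, $J_{34}<0$; $J_{21}=\partial\dot s/\partial\mu_{34}<0$, $J_{43}=\partial \dot z/\partial\mu_{200}<0$; $J_{42}=\partial\dot z/\partial s>0$. In particular, with $\sigma=(-1,1,-1,1)$ and $\Sigma=\mathrm{diag}(\sigma)$, the matrix $\Sigma J(x)\Sigma$ is Metzler (all off-diagonal entries nonnegative) for every $x\in(0,\infty)^4$, and $J(x)$ is irreducible for every $x\in(0,\infty)^4$.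
   Context: All of the following are positive real parameters: $A_s, A_z, E_{34}, E_{200}, E_S, E_Z, \beta_{34}, \beta_{-34}, \beta_{200}, \beta_{-200}, \gamma_s, \gamma_z, c_s, c_{-s}, c_z, c_{-z}, \beta_s, \beta_{s1}, \beta_{s2}, \beta_z, \beta_{z1}, \beta_{z2}, k_s, k_{s1}, k_{s2}, k_{-s}, k_z, k_{z1}, k_{z2}, k_{-z}, \delta_z$. They satisfy $\beta_s<\beta_{s1}<\beta_{s2}$, $\beta_z<\beta_{z1}<\beta_{z2}$, $k_s>k_{s1}>k_{s2}$ and $k_z>k_{z1}>k_{z2}$. For $\rho\in\{s,z\}$ define $e_{\rho1}=\beta_{\rho1}\beta_{\rho2}+(\beta_{\rho1}+\beta_{\rho2})c_{-\rho}+c_{-\rho}^2$, $e_{\rho2}=c_\rho(\beta_{\rho2}+c_{-\rho})$, $e_{\rho3}=\beta_\rho\beta_{\rho2}+\beta_{\rho1}\beta_{\rho2}+\beta_{\rho1}c_{-\rho}$, $\Delta_\rho(\mu)=\beta_{\rho2}c_\rho^2\mu^2+e_{\rho3}c_\rho\mu+e_{\rho1}\beta_\rho$, and $N_\rho(\mu)=\dfrac{k_\rho(\beta_{\rho2}c_\rho\mu+e_{\rho1})+k_{\rho1}e_{\rho2}\mu+k_{\rho2}c_\rho^2\mu^2}{\Delta_\rho(\mu)}$ for $\mu\ge 0$. The reduced system $\dot x=G(x)$, $x=(\mu_{34},s,\mu_{200},z)$, is $\dot\mu_{34}=\dfrac{\beta_{34}E_{34}A_sA_z}{(s^2+A_s)(z^2+A_z)}-\beta_{-34}\mu_{34}$,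 $\dot s=\dfrac{\gamma_sE_SA_s}{s^2+A_s}N_s(\mu_{34})-k_{-s}s$, $\dot\mu_{200}=\dfrac{\beta_{200}E_{200}A_sA_z}{(s^2+A_s)(z^2+A_z)}-\beta_{-200}\mu_{200}$, $\dot z=\delta_z+\dfrac{\gamma_zE_Zs^2z^2}{(s^2+A_s)(z^2+A_z)}N_z(\mu_{200})-k_{-z}z$. *)

theory Defs
  imports "HOL-Analysis.Analysis"
begin

record params =
  As :: real  Az :: real  E34 :: real  E200 :: real  ES :: real  EZ :: real
  b34 :: real  bm34 :: real  b200 :: real  bm200 :: real
  gs :: real  gz :: real  cs :: real  cms :: real  cz :: real  cmz :: real
  bs :: real  bs1 :: real  bs2 :: real  bz :: real  bz1 :: real  bz2 :: real
  ks :: real  ks1 :: real  ks2 :: real  kms :: real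
  kz :: real  kz1 :: real  kz2 :: real  kmz :: real  dz :: real

definition admissible :: "params \<Rightarrow> bool" where
  "admissible p \<longleftrightarrow>
     0 < As p \<and> 0 < Az p \<and> 0 < E34 p \<and> 0 < E200 p \<and> 0 < ES p \<and> 0 < EZ p \<and>
     0 < b34 p \<and> 0 < bm34 p \<and> 0 < b200 p \<and> 0 < bm200 p \<and>
     0 < gs p \<and> 0 < gz p \<and> 0 < cs p \<and> 0 < cms p \<and> 0 < cz p \<and> 0 < cmz p \<and>
     0 < bs p \<and> 0 < bs1 p \<and> 0 < bs2 p \<and> 0 < bz p \<and> 0 < bz1 p \<and> 0 < bz2 p \<and>
     0 < ks p \<and> 0 < ks1 p \<and> 0 < ks2 p \<and> 0 < kms p \<and>
     0 < kz p \<and> 0 < kz1 p \<and> 0 < kz2 p \<and> 0 < kmz p \<and> 0 < dz p \<and>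
     bs p < bs1 p \<and> bs1 p < bs2 p \<and> bz p < bz1 p \<and> bz1 p < bz2 p \<and>
     ks p > ks1 p \<and> ks1 p > ks2 p \<and> kz p > kz1 p \<and> kz1 p > kz2 p"

definition e1 :: "real \<Rightarrow> real \<Rightarrow> real \<Rightarrow> real \<Rightarrow> real \<Rightarrow> real" where
  "e1 b b1 b2 c cm = b1 * b2 + (b1 + b2) * cm + cm\<^sup>2"
definition e2 :: "real \<Rightarrow> real \<Rightarrow> real \<Rightarrow> real \<Rightarrow> real \<Rightarrow> real" where
  "e2 b b1 b2 c cm = c * (b2 + cm)"
definition e3 :: "real \<Rightarrow> real \<Rightarrow> real \<Rightarrow> real \<Rightarrow> real \<Rightarrow> real" where
  "e3 b b1 b2 c cm = b * b2 + b1 * b2 + b1 * cm"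
definition Dlt :: "real \<Rightarrow> real \<Rightarrow> real \<Rightarrow> real \<Rightarrow> real \<Rightarrow> real \<Rightarrow> real" where
  "Dlt b b1 b2 c cm mu = b2 * c\<^sup>2 * mu\<^sup>2 + e3 b b1 b2 c cm * c * mu + e1 b b1 b2 c cm * b"
definition Nf :: "real \<Rightarrow> real \<Rightarrow> real \<Rightarrow> real \<Rightarrow> real \<Rightarrow> real \<Rightarrow> real \<Rightarrow> real \<Rightarrow> real \<Rightarrow> real" where
  "Nf k k1 k2 b b1 b2 c cm mu =
     (k * (b2 * c * mu + e1 b b1 b2 c cm) + k1 * e2 b b1 b2 c cm * mu + k2 * c\<^sup>2 * mu\<^sup>2)
     / Dlt b b1 b2 c cm mu"

definition Ns :: "params \<Rightarrow> real \<Rightarrow> real" where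
  "Ns p mu = Nf (ks p) (ks1 p) (ks2 p) (bs p) (bs1 p) (bs2 p) (cs p) (cms p) mu"
definition Nz :: "params \<Rightarrow> real \<Rightarrow> real" where
  "Nz p mu = Nf (kz p) (kz1 p) (kz2 p) (bz p) (bz1 p) (bz2 p) (cz p) (cmz p) mu"

definition Gc :: "params \<Rightarrow> nat \<Rightarrow> (nat \<Rightarrow> real) \<Rightarrow> real" where
  "Gc p i x = (let m34 = x 1; s = x 2; m200 = x 3; z = x 4 in
     if i = 1 then b34 p * E34 p * As p * Az p / ((s\<^sup>2 + As p) * (z\<^sup>2 + Az p)) - bm34 p * m34
     else if i = 2 then gs p * ES p * As p / (s\<^sup>2 + As p) * Ns p m34 - kms p * s
     else if i = 3 then b200 p * E200 p * As p * Az p / ((s\<^sup>2 + As p) * (z\<^sup>2 + Az p)) - bm200 p * m200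
     else if i = 4 then dz p + gz p * EZ p * s\<^sup>2 * z\<^sup>2 / ((s\<^sup>2 + As p) * (z\<^sup>2 + Az p)) * Nz p m200 - kmz p * z
     else 0)"

definition jac :: "params \<Rightarrow> (nat \<Rightarrow> real) \<Rightarrow> nat \<Rightarrow> nat \<Rightarrow> real" where
  "jac p x i j = deriv (\<lambda>t. Gc p i (x(j := t))) (x j)"

definition metzler :: "nat \<Rightarrow> (nat \<Rightarrow> nat \<Rightarrow> real) \<Rightarrow> bool" where
  "metzler n M \<longleftrightarrow> (\<forall>i\<in>{1..n}. \<forall>j\<in>{1..n}. i \<noteq> j \<longrightarrow> 0 \<le> M i j)"

definition reducible_mat :: "nat \<Rightarrow> (nat \<Rightarrow> nat \<Rightarrow> real) \<Rightarrow> bool" where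
  "reducible_mat n M \<longleftrightarrow> (\<exists>\<pi> k. \<pi> permutes {1..n} \<and> 1 \<le> k \<and> k < n \<and>
      (\<forall>i j. k < i \<and> i \<le> n \<and> 1 \<le> j \<and> j \<le> k \<longrightarrow> M (\<pi> i) (\<pi> j) = 0))"
definition irreducible_mat :: "nat \<Rightarrow> (nat \<Rightarrow> nat \<Rightarrow> real) \<Rightarrow> bool" where
  "irreducible_mat n M \<longleftrightarrow> \<not> reducible_mat n M"

definition sigma :: "nat \<Rightarrow> real" where
  "sigma i = (if i = 1 \<or> i = 3 then -1 else 1)"

end

theory Submission
  imports Defs
begin


lemma Nf_props:
  fixes k k1 k2 b b1 b2 c cm mu :: real
  assumes "0<b" "b<b1" "b1<b2" "0<c" "0<cm" "0<k2" "k2<k1" "k1<k" "0 \<le> mu"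
  shows "0 < Dlt b b1 b2 c cm mu" "0 < Nf k k1 k2 b b1 b2 c cm mu"
    "\<exists>D. (Nf k k1 k2 b b1 b2 c cm has_real_derivative D) (at mu) \<and> D < 0"
proof -
  define E1 where "E1 = e1 b b1 b2 c cm"
  define E2 where "E2 = e2 b b1 b2 c cm"
  define E3 where "E3 = e3 b b1 b2 c cm"
  have E1p: "E1 > 0" unfolding E1_def e1_def using assms by (simp add: add_pos_pos)
  have E3p: "E3 > 0" unfolding E3_def e3_def using assms by (simp add: add_pos_pos)
  have E2p: "E2 > 0" unfolding E2_def e2_def using assms by simp
  define P where "P = (\<lambda>mu. k * (b2 * c * mu + E1) + k1 * E2 * mu + k2 * c\<^sup>2 * mu\<^sup>2)"
  define Q where "Q = (\<lambda>mu::real. b2 * c\<^sup>2 * mu\<^sup>2 + E3 * c * mu + E1 * b)"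
  have NfPQ: "Nf k k1 k2 b b1 b2 c cm = (\<lambda>mu. P mu / Q mu)"
    unfolding Nf_def Dlt_def P_def Q_def E1_def E2_def E3_def by simp
  have Qpos: "Q mu > 0" unfolding Q_def using assms E1p E3p
    by (intro add_nonneg_pos add_nonneg_nonneg) auto
  show "0 < Dlt b b1 b2 c cm mu" using Qpos unfolding Q_def Dlt_def E1_def E3_def by simp
  have Ppos: "P mu > 0" unfolding P_def using assms E1p E2p
    by (intro add_pos_nonneg mult_pos_pos add_nonneg_pos) auto
  show "0 < Nf k k1 k2 b b1 b2 c cm mu" using Ppos Qpos NfPQ by simp
  have dP: "(P has_real_derivative (k*b2*c + k1*E2 + 2*k2*c\<^sup>2*mu)) (at mu)"
    unfolding P_def by (auto intro!: derivative_eq_intros simp: algebra_simps power2_eq_square)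
  have dQ: "(Q has_real_derivative (2*b2*c\<^sup>2*mu + E3*c)) (at mu)"
    unfolding Q_def by (auto intro!: derivative_eq_intros simp: algebra_simps power2_eq_square)
  have dN: "((\<lambda>mu. P mu / Q mu) has_real_derivative
     (((k*b2*c + k1*E2 + 2*k2*c\<^sup>2*mu) * Q mu - P mu * (2*b2*c\<^sup>2*mu + E3*c)) / (Q mu * Q mu))) (at mu)"
    using DERIV_divide[OF dP dQ] Qpos by simp
  have num: "(k*b2*c + k1*E2 + 2*k2*c\<^sup>2*mu) * Q mu - P mu * (2*b2*c\<^sup>2*mu + E3*c)
     = E1*c*(b2+cm)*(k1*b - k*b1) + 2*c\<^sup>2*E1*(k2*b - k*b2)*mu
       + c^3*((k2*b - k*b2)*b2 + (k2*b1 - k1*b2)*b2 + (k2*b1 - k1*b2)*cm)*mu\<^sup>2"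
    unfolding P_def Q_def E1_def E2_def E3_def e1_def e2_def e3_def
    by (simp add: algebra_simps power2_eq_square power3_eq_cube)
  have t1: "k1*b - k*b1 < 0"
  proof -
    have "k1*b < k*b" using assms by simp
    also have "k*b < k*b1" using assms by simp
    finally show ?thesis by simp
  qed
  have t2: "k2*b - k*b2 < 0"
  proof -
    have "k2*b < k*b" using assms by simp
    also have "k*b < k*b2" using assms by simp
    finally show ?thesis by simp
  qed
  have t3: "k2*b1 - k1*b2 < 0"
  proof -
    have "k2*b1 < k1*b1" using assms by simp
    also have "k1*b1 < k1*b2" using assms by simp
    finally show ?thesis by simp
  qed
  have a1: "E1*c*(b2+cm)*(k1*b - k*b1) < 0"
    using E1p assms t1 by (simp add: mult_pos_neg)
  have a2: "2*c\<^sup>2*E1*(k2*b - k*b2)*mu \<le> 0"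
  proof -
    have "2*c\<^sup>2*E1 > 0" using E1p assms by simp
    then have "2*c\<^sup>2*E1*(k2*b - k*b2) < 0" using t2 by (rule mult_pos_neg)
    from mult_nonpos_nonneg[OF less_imp_le[OF this] assms(9)] show ?thesis .
  qed
  have a3: "c^3*((k2*b - k*b2)*b2 + (k2*b1 - k1*b2)*b2 + (k2*b1 - k1*b2)*cm)*mu\<^sup>2 \<le> 0"
  proof -
    have "(k2*b - k*b2)*b2 + (k2*b1 - k1*b2)*b2 + (k2*b1 - k1*b2)*cm < 0"
      using t2 t3 assms by (smt (verit) mult_neg_pos)
    then have "c^3*((k2*b - k*b2)*b2 + (k2*b1 - k1*b2)*b2 + (k2*b1 - k1*b2)*cm) < 0"
      using assms by (intro mult_pos_neg) auto
    from mult_nonpos_nonneg[OF less_imp_le[OF this] zero_le_power2[of mu]] show ?thesis .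
  qed
  have "(((k*b2*c + k1*E2 + 2*k2*c\<^sup>2*mu) * Q mu - P mu * (2*b2*c\<^sup>2*mu + E3*c)) / (Q mu * Q mu)) < 0"
  proof (rule divide_neg_pos)
    show "(k*b2*c + k1*E2 + 2*k2*c\<^sup>2*mu) * Q mu - P mu * (2*b2*c\<^sup>2*mu + E3*c) < 0"
      unfolding num using a1 a2 a3 by linarith
    show "0 < Q mu * Q mu" using Qpos by simp
  qed
  then show "\<exists>D. (Nf k k1 k2 b b1 b2 c cm has_real_derivative D) (at mu) \<and> D < 0"
    using dN NfPQ by auto
qed



lemma irr_aux:
  fixes M :: "nat \<Rightarrow> nat \<Rightarrow> real"
  assumes n12: "M 1 2 \<noteq> 0" and n14: "M 1 4 \<noteq> 0" and n21: "M 2 1 \<noteq> 0"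
    and n32: "M 3 2 \<noteq> 0" and n34: "M 3 4 \<noteq> 0" and n42: "M 4 2 \<noteq> 0" and n43: "M 4 3 \<noteq> 0"
  shows "irreducible_mat 4 M"
  unfolding irreducible_mat_def reducible_mat_def
proof
  assume "\<exists>\<pi> k. \<pi> permutes {1..4} \<and> 1 \<le> k \<and> k < 4 \<and>
      (\<forall>i j. k < i \<and> i \<le> 4 \<and> 1 \<le> j \<and> j \<le> k \<longrightarrow> M (\<pi> i) (\<pi> j) = 0)"
  then obtain \<pi> k where pp: "\<pi> permutes {1..4::nat}" and k: "1 \<le> k" "k < 4"
    and Z0: "\<And>i j. k < i \<Longrightarrow> i \<le> 4 \<Longrightarrow> 1 \<le> j \<Longrightarrow> j \<le> k \<Longrightarrow> M (\<pi> i) (\<pi> j) = 0"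
    by blast
  define S where "S = \<pi> ` {1..k}"
  have Z: "M a b = 0" if ha: "a \<in> {1..4}" "a \<notin> S" "b \<in> S" for a b
  proof -
    obtain j where j: "j \<in> {1..k}" "b = \<pi> j" using ha(3) unfolding S_def by auto
    have "a \<in> \<pi> ` {1..4}" using permutes_image[OF pp] ha(1) by simp
    then obtain i where i: "i \<in> {1..4}" "a = \<pi> i" by auto
    have "i \<notin> {1..k}" using ha(2) i unfolding S_def by auto
    then show ?thesis using Z0[of i j] i j by auto
  qed
  have b0: "\<pi> 1 \<in> S" using k unfolding S_def by auto
  have b0': "\<pi> 1 \<in> {1..4}" using permutes_in_image[OF pp] by simp
  have a0: "\<pi> 4 \<notin> S"
  proof
    assume "\<pi> 4 \<in> S"
    obtain j where "j \<in> {1..k}" "\<pi> 4 = \<pi> j" using \<open>\<pi> 4 \<in> S\<close> unfolding S_def by auto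
    then have "4 = j" using permutes_inj[OF pp] by (auto dest: injD)
    then show False using \<open>j \<in> {1..k}\<close> k by auto
  qed
  have a0': "\<pi> 4 \<in> {1..4}" using permutes_in_image[OF pp] by simp
  have h1: "2 \<in> S" if "1 \<in> S" using Z[of 2 1] n21 that by (cases "2 \<in> S") auto
  have h2a: "1 \<in> S" if "2 \<in> S" using Z[of 1 2] n12 that by (cases "1 \<in> S") auto
  have h2b: "3 \<in> S" if "2 \<in> S" using Z[of 3 2] n32 that by (cases "3 \<in> S") auto
  have h2c: "4 \<in> S" if "2 \<in> S" using Z[of 4 2] n42 that by (cases "4 \<in> S") auto
  have h3: "4 \<in> S" if "3 \<in> S" using Z[of 4 3] n43 that by (cases "4 \<in> S") auto
  have h4: "1 \<in> S" if "4 \<in> S" using Z[of 1 4] n14 that by (cases "1 \<in> S") auto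
  have "2 \<in> S"
  proof -
    have "\<pi> 1 = 1 \<or> \<pi> 1 = 2 \<or> \<pi> 1 = 3 \<or> \<pi> 1 = 4" using b0' by auto
    then show ?thesis
    proof (elim disjE)
      assume "\<pi> 1 = 1" then show ?thesis using b0 h1 by simp
    next
      assume "\<pi> 1 = 2" then show ?thesis using b0 by simp
    next
      assume "\<pi> 1 = 3" then show ?thesis using b0 h1 h3 h4 by simp
    next
      assume "\<pi> 1 = 4" then show ?thesis using b0 h1 h4 by simp
    qed
  qed
  then have all: "1 \<in> S" "2 \<in> S" "3 \<in> S" "4 \<in> S" using h2a h2b h2c by auto
  have "\<pi> 4 = 1 \<or> \<pi> 4 = 2 \<or> \<pi> 4 = 3 \<or> \<pi> 4 = 4" using a0' by auto
  then show False using a0 all by (elim disjE) simp_all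
qed



lemma dquot:
  fixes g :: "real \<Rightarrow> real"
  assumes "(g has_real_derivative g') (at t)" "g t \<noteq> 0"
  shows "((\<lambda>t. K / g t) has_real_derivative (- K * g' / (g t * g t))) (at t)"
  using DERIV_divide[OF DERIV_const assms(1) assms(2)] by simp

lemma dsq: "((\<lambda>t::real. (t\<^sup>2 + a) * c) has_real_derivative (2 * t * c)) (at t)"
  by (auto intro!: derivative_eq_intros)

lemma dsq2: "((\<lambda>t::real. c * (t\<^sup>2 + a)) has_real_derivative (c * (2 * t))) (at t)"
  by (auto intro!: derivative_eq_intros)


lemma dd: "(f has_real_derivative D) (at y) \<Longrightarrow> f differentiable (at y)"
  by (auto simp: real_differentiable_def)

theorem mainTheorem2:
  fixes p :: params and x :: "nat \<Rightarrow> real"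
  assumes "admissible p"
    and "\<forall>i\<in>{1..4::nat}. 0 < x i"
  shows "(\<forall>i\<in>{1..4::nat}. \<forall>j\<in>{1..4::nat}. (\<lambda>t. Gc p i (x(j := t))) differentiable (at (x j)))
    \<and> jac p x 1 3 = 0 \<and> jac p x 2 3 = 0 \<and> jac p x 2 4 = 0 \<and> jac p x 3 1 = 0 \<and> jac p x 4 1 = 0
    \<and> jac p x 1 2 < 0 \<and> jac p x 1 4 < 0 \<and> jac p x 3 2 < 0 \<and> jac p x 3 4 < 0
    \<and> jac p x 2 1 < 0 \<and> jac p x 4 3 < 0
    \<and> jac p x 4 2 > 0
    \<and> metzler 4 (\<lambda>i j. sigma i * jac p x i j * sigma j)
    \<and> irreducible_mat 4 (jac p x)"
proof -
  note A = assms(1)[unfolded admissible_def]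
  have x1: "x 1 > 0" and x2: "x 2 > 0" and x3: "x 3 > 0" and x4: "x 4 > 0" using assms(2) by auto
  define a where "a = As p"
  define az where "az = Az p"
  have a: "a > 0" and az: "az > 0" using A a_def az_def by auto
  define s where "s = x 2"
  define z where "z = x 4"
  have sp: "s > 0" and zp: "z > 0" using x2 x4 s_def z_def by auto
  have sa: "s\<^sup>2 + a > 0" and za: "z\<^sup>2 + az > 0" using a az by (auto intro: add_nonneg_pos)
  have saz: "(s\<^sup>2 + a) * (z\<^sup>2 + az) > 0" using sa za by simp
  have ta: "t\<^sup>2 + a \<noteq> 0" for t using a by (metis add_nonneg_pos less_irrefl zero_le_power2)
  define K1 where "K1 = b34 p * E34 p * As p * Az p"
  define K3 where "K3 = b200 p * E200 p * As p * Az p"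
  have K1: "K1 > 0" and K3: "K3 > 0" using A unfolding K1_def K3_def by auto
  have Ns_eq: "Ns p = Nf (ks p) (ks1 p) (ks2 p) (bs p) (bs1 p) (bs2 p) (cs p) (cms p)"
    by (simp add: fun_eq_iff Ns_def)
  have Nz_eq: "Nz p = Nf (kz p) (kz1 p) (kz2 p) (bz p) (bz1 p) (bz2 p) (cz p) (cmz p)"
    by (simp add: fun_eq_iff Nz_def)
  obtain Ds where dNs: "(Ns p has_real_derivative Ds) (at (x 1))" and Ds: "Ds < 0"
    using Nf_props(3)[of "bs p" "bs1 p" "bs2 p" "cs p" "cms p" "ks2 p" "ks1 p" "ks p" "x 1"] A x1
    unfolding Ns_eq by auto
  obtain Dz where dNz: "(Nz p has_real_derivative Dz) (at (x 3))" and Dz: "Dz < 0"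
    using Nf_props(3)[of "bz p" "bz1 p" "bz2 p" "cz p" "cmz p" "kz2 p" "kz1 p" "kz p" "x 3"] A x3
    unfolding Nz_eq by auto
  have Nzpos: "Nz p (x 3) > 0"
    using Nf_props(2)[of "bz p" "bz1 p" "bz2 p" "cz p" "cmz p" "kz2 p" "kz1 p" "kz p" "x 3"] A x3
    unfolding Nz_eq by auto

  define P where "P = (s\<^sup>2 + a) * (z\<^sup>2 + az)"
  have Pp: "P > 0" using saz P_def by simp
  define D12 where "D12 = - K1 * (2 * s * (z\<^sup>2 + az)) / (P * P) - 0"
  have d12: "((\<lambda>t. Gc p 1 (x(2 := t))) has_real_derivative D12) (at (x 2))"
  proof -
    have e: "(\<lambda>t. Gc p 1 (x(2 := t))) = (\<lambda>t. K1 / ((t\<^sup>2 + a) * (z\<^sup>2 + az)) - bm34 p * x 1)"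
      by (simp add: Gc_def Let_def fun_eq_iff K1_def a_def az_def z_def)
    show ?thesis unfolding e D12_def P_def s_def
      by (rule DERIV_diff[OF dquot[OF dsq] DERIV_const]) (use sa za s_def in simp)
  qed
  have j12: "D12 < 0" unfolding D12_def using K1 sp za Pp by (simp add: divide_neg_pos mult_pos_pos)
  define D14 where "D14 = - K1 * ((s\<^sup>2 + a) * (2 * z)) / (P * P) - 0"
  have d14: "((\<lambda>t. Gc p 1 (x(4 := t))) has_real_derivative D14) (at (x 4))"
  proof -
    have e: "(\<lambda>t. Gc p 1 (x(4 := t))) = (\<lambda>t. K1 / ((s\<^sup>2 + a) * (t\<^sup>2 + az)) - bm34 p * x 1)"
      by (simp add: Gc_def Let_def fun_eq_iff K1_def a_def az_def s_def)
    show ?thesis unfolding e D14_def P_def z_def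
      by (rule DERIV_diff[OF dquot[OF dsq2] DERIV_const]) (use sa za z_def in simp)
  qed
  have j14: "D14 < 0" unfolding D14_def using K1 zp sa Pp by (simp add: divide_neg_pos mult_pos_pos)
  have d11: "((\<lambda>t. Gc p 1 (x(1 := t))) has_real_derivative (- bm34 p)) (at (x 1))"
    by (simp add: Gc_def Let_def) (auto intro!: derivative_eq_intros)
  have d13: "((\<lambda>t. Gc p 1 (x(3 := t))) has_real_derivative 0) (at (x 3))"
    by (simp add: Gc_def Let_def)
  define D32 where "D32 = - K3 * (2 * s * (z\<^sup>2 + az)) / (P * P) - 0"
  have d32: "((\<lambda>t. Gc p 3 (x(2 := t))) has_real_derivative D32) (at (x 2))"
  proof -
    have e: "(\<lambda>t. Gc p 3 (x(2 := t))) = (\<lambda>t. K3 / ((t\<^sup>2 + a) * (z\<^sup>2 + az)) - bm200 p * x 3)"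
      by (simp add: Gc_def Let_def fun_eq_iff K3_def a_def az_def z_def)
    show ?thesis unfolding e D32_def P_def s_def
      by (rule DERIV_diff[OF dquot[OF dsq] DERIV_const]) (use sa za s_def in simp)
  qed
  have j32: "D32 < 0" unfolding D32_def using K3 sp za Pp by (simp add: divide_neg_pos mult_pos_pos)
  define D34 where "D34 = - K3 * ((s\<^sup>2 + a) * (2 * z)) / (P * P) - 0"
  have d34: "((\<lambda>t. Gc p 3 (x(4 := t))) has_real_derivative D34) (at (x 4))"
  proof -
    have e: "(\<lambda>t. Gc p 3 (x(4 := t))) = (\<lambda>t. K3 / ((s\<^sup>2 + a) * (t\<^sup>2 + az)) - bm200 p * x 3)"
      by (simp add: Gc_def Let_def fun_eq_iff K3_def a_def az_def s_def)
    show ?thesis unfolding e D34_def P_def z_def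
      by (rule DERIV_diff[OF dquot[OF dsq2] DERIV_const]) (use sa za z_def in simp)
  qed
  have j34: "D34 < 0" unfolding D34_def using K3 zp sa Pp by (simp add: divide_neg_pos mult_pos_pos)
  have d33: "((\<lambda>t. Gc p 3 (x(3 := t))) has_real_derivative (- bm200 p)) (at (x 3))"
    by (simp add: Gc_def Let_def) (auto intro!: derivative_eq_intros)
  have d31: "((\<lambda>t. Gc p 3 (x(1 := t))) has_real_derivative 0) (at (x 1))"
    by (simp add: Gc_def Let_def)
  define C2 where "C2 = gs p * ES p * As p / (s\<^sup>2 + As p)"
  have C2: "C2 > 0" unfolding C2_def using A sa a_def by simp
  have d21: "((\<lambda>t. Gc p 2 (x(1 := t))) has_real_derivative (C2 * Ds - 0)) (at (x 1))"
  proof -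
    have e: "(\<lambda>t. Gc p 2 (x(1 := t))) = (\<lambda>t. C2 * Ns p t - kms p * x 2)"
      by (simp add: Gc_def Let_def fun_eq_iff C2_def s_def)
    show ?thesis unfolding e by (rule DERIV_diff[OF DERIV_cmult[OF dNs] DERIV_const])
  qed
  have j21: "C2 * Ds - 0 < 0" using C2 Ds by (simp add: mult_pos_neg)
  have d23: "((\<lambda>t. Gc p 2 (x(3 := t))) has_real_derivative 0) (at (x 3))"
    by (simp add: Gc_def Let_def)
  have d24: "((\<lambda>t. Gc p 2 (x(4 := t))) has_real_derivative 0) (at (x 4))"
    by (simp add: Gc_def Let_def)
  have df22: "(\<lambda>t. Gc p 2 (x(2 := t))) differentiable (at (x 2))"
    using ta[of "x 2"] unfolding a_def by (simp add: Gc_def Let_def)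
  define C4 where "C4 = gz p * EZ p * s\<^sup>2 * z\<^sup>2 / P"
  have C4: "C4 > 0" unfolding C4_def using A sp zp Pp by simp
  have d43: "((\<lambda>t. Gc p 4 (x(3 := t))) has_real_derivative (0 + C4 * Dz - 0)) (at (x 3))"
  proof -
    have e: "(\<lambda>t. Gc p 4 (x(3 := t))) = (\<lambda>t. dz p + C4 * Nz p t - kmz p * x 4)"
      by (simp add: Gc_def Let_def fun_eq_iff C4_def s_def z_def P_def a_def az_def)
    show ?thesis unfolding e by (rule DERIV_diff[OF DERIV_add[OF DERIV_const DERIV_cmult[OF dNz]] DERIV_const])
  qed
  have j43: "0 + C4 * Dz - 0 < 0" using C4 Dz by (simp add: mult_pos_neg)
  define C42 where "C42 = gz p * EZ p * z\<^sup>2 / (z\<^sup>2 + az) * Nz p (x 3)"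
  have C42: "C42 > 0" unfolding C42_def using A zp za Nzpos by simp
  define D42 where "D42 = 0 + C42 * ((2 * s * (s\<^sup>2 + a) - s\<^sup>2 * (2 * s)) / ((s\<^sup>2 + a) * (s\<^sup>2 + a))) - 0"
  have d42: "((\<lambda>t. Gc p 4 (x(2 := t))) has_real_derivative D42) (at (x 2))"
  proof -
    have e: "(\<lambda>t. Gc p 4 (x(2 := t))) = (\<lambda>t. dz p + C42 * (t\<^sup>2 / (t\<^sup>2 + a)) - kmz p * x 4)"
    proof
      fix t
      have "t\<^sup>2 + a \<noteq> 0" by (rule ta)
      then show "Gc p 4 (x(2 := t)) = dz p + C42 * (t\<^sup>2 / (t\<^sup>2 + a)) - kmz p * x 4"
        using za by (simp add: Gc_def Let_def C42_def z_def a_def az_def field_simps)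
    qed
    have q: "((\<lambda>t. t\<^sup>2 / (t\<^sup>2 + a)) has_real_derivative
        ((2 * s * (s\<^sup>2 + a) - s\<^sup>2 * (2 * s)) / ((s\<^sup>2 + a) * (s\<^sup>2 + a)))) (at (x 2))"
      unfolding s_def
      by (rule DERIV_divide) (auto intro!: derivative_eq_intros simp: ta)
    show ?thesis unfolding e D42_def
      by (rule DERIV_diff[OF DERIV_add[OF DERIV_const DERIV_cmult[OF q]] DERIV_const])
  qed
  have j42: "D42 > 0"
  proof -
    have "2 * s * (s\<^sup>2 + a) - s\<^sup>2 * (2 * s) = 2 * s * a" by (simp add: algebra_simps power2_eq_square)
    then show ?thesis unfolding D42_def using C42 sp a sa by simp
  qed
  have d41: "((\<lambda>t. Gc p 4 (x(1 := t))) has_real_derivative 0) (at (x 1))"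
    by (simp add: Gc_def Let_def)
  have df44: "(\<lambda>t. Gc p 4 (x(4 := t))) differentiable (at (x 4))"
    using ta[of "x 2"] za unfolding a_def az_def z_def by (simp add: Gc_def Let_def)
  have diff: "\<forall>i\<in>{1..4::nat}. \<forall>j\<in>{1..4::nat}. (\<lambda>t. Gc p i (x(j := t))) differentiable (at (x j))"
  proof -
    have e: "{1..4::nat} = {1,2,3,4}" by auto
    show ?thesis unfolding e
      using dd[OF d11] dd[OF d12] dd[OF d13] dd[OF d14]
        dd[OF d21] df22 dd[OF d23] dd[OF d24]
        dd[OF d31] dd[OF d32] dd[OF d33] dd[OF d34]
        dd[OF d41] dd[OF d42] dd[OF d43] df44 by simp
  qed
  have J12: "jac p x 1 2 = D12" unfolding jac_def using DERIV_imp_deriv[OF d12] by simp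
  have J14: "jac p x 1 4 = D14" unfolding jac_def using DERIV_imp_deriv[OF d14] by simp
  have J13: "jac p x 1 3 = 0" unfolding jac_def using DERIV_imp_deriv[OF d13] by simp
  have J32: "jac p x 3 2 = D32" unfolding jac_def using DERIV_imp_deriv[OF d32] by simp
  have J34: "jac p x 3 4 = D34" unfolding jac_def using DERIV_imp_deriv[OF d34] by simp
  have J31: "jac p x 3 1 = 0" unfolding jac_def using DERIV_imp_deriv[OF d31] by simp
  have J21: "jac p x 2 1 = C2 * Ds - 0" unfolding jac_def using DERIV_imp_deriv[OF d21] by simp
  have J23: "jac p x 2 3 = 0" unfolding jac_def using DERIV_imp_deriv[OF d23] by simp
  have J24: "jac p x 2 4 = 0" unfolding jac_def using DERIV_imp_deriv[OF d24] by simp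
  have J43: "jac p x 4 3 = 0 + C4 * Dz - 0" unfolding jac_def using DERIV_imp_deriv[OF d43] by simp
  have J42: "jac p x 4 2 = D42" unfolding jac_def using DERIV_imp_deriv[OF d42] by simp
  have J41: "jac p x 4 1 = 0" unfolding jac_def using DERIV_imp_deriv[OF d41] by simp
  have L12: "jac p x 1 2 < 0" using J12 j12 by simp
  have L14: "jac p x 1 4 < 0" using J14 j14 by simp
  have L32: "jac p x 3 2 < 0" using J32 j32 by simp
  have L34: "jac p x 3 4 < 0" using J34 j34 by simp
  have L21: "jac p x 2 1 < 0" using J21 j21 by simp
  have L43: "jac p x 4 3 < 0" using J43 j43 by simp
  have L42: "jac p x 4 2 > 0" using J42 j42 by simp
  have met: "metzler 4 (\<lambda>i j. sigma i * jac p x i j * sigma j)"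
  proof -
    have e: "{1..4::nat} = {1,2,3,4}" by auto
    show ?thesis unfolding metzler_def e
      using L12 L14 L32 L34 L21 L43 L42 J13 J31 J23 J24 J41 by (simp add: sigma_def)
  qed
  have irr: "irreducible_mat 4 (jac p x)"
    by (rule irr_aux) (use L12 L14 L32 L34 L21 L43 L42 in auto)
  show ?thesis using diff J13 J23 J24 J31 J41 L12 L14 L32 L34 L21 L43 L42 met irr by simp
qed

end
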